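(* Consider the asynchronous $(n,k)$ game on the complete graph with agent set $[n]$ consisting of $n_r$ rejectors, $n_c$ consentors and $n-n_r-n_c\ge 2$ majority followers, with threshold satisfying $n_c<k\le n-n_r$. Then the probability that a decision is never made in finite time, i.e. $P\big(\sum_{i\in[n]}x_i(t)<k \text{ for all } t\ge 0\big)$, is at most $$\frac{(n-n_c-n_r)(n+n_c+n_r-1)+4n_cn_r}{4n_c(n-n_c)}.$$
   Context: Each agent $i\in[n]$ holds an opinion $x_i(t)\in\{0,1\}$ at time $t=0,1,2,\dots$. The social graph is complete: every agent's social neighbors are all the other $n-1$ agents. In the $(n,k)$ game a decision is made at time $t$ if $\sum_{i\in[n]}x_i(t)\ge k$. The game is asynchronous: at each time step a single agent, chosen uniformly at random from $[n]$ (independently of the past), updates its opinion, and all other opinions stay the same. A rejector holds opinion $0$ at all times; a consentor holds opinion $1$ at all times. A majority follower has initial opinion distributed as Bernoulli$(1/2)$ (independently across agents), and when it updates it adopts the majority opinion among its social neighbors (the other $n-1$ agents). *)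

theory Defs
  imports "HOL-Probability.Probability"
begin

datatype agent_kind = Rejector | Consentor | Follower

definition num_kind :: "nat \<Rightarrow> (nat \<Rightarrow> agent_kind) \<Rightarrow> agent_kind \<Rightarrow> nat" where
  "num_kind n kind a = card {i. i < n \<and> kind i = a}"

definition init_op :: "(nat \<Rightarrow> agent_kind) \<Rightarrow> (nat \<Rightarrow> bool) \<Rightarrow> nat \<Rightarrow> bool" where
  "init_op kind b i = (case kind i of Rejector \<Rightarrow> False | Consentor \<Rightarrow> True | Follower \<Rightarrow> b i)"

text \<open>Update of agent j in the configuration x (complete graph on 0..n-1).\<close>
definition update :: "nat \<Rightarrow> (nat \<Rightarrow> agent_kind) \<Rightarrow> (nat \<Rightarrow> bool) \<Rightarrow> nat \<Rightarrow> (nat \<Rightarrow> bool)" where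
  "update n kind x j = x(j :=
     (case kind j of
        Rejector \<Rightarrow> False
      | Consentor \<Rightarrow> True
      | Follower \<Rightarrow>
          (let c1 = card {i. i < n \<and> i \<noteq> j \<and> x i};
               c0 = card {i. i < n \<and> i \<noteq> j \<and> \<not> x i}
           in if c1 > c0 then True else if c0 > c1 then False else x j)))"

fun traj :: "nat \<Rightarrow> (nat \<Rightarrow> agent_kind) \<Rightarrow> (nat \<Rightarrow> bool) \<Rightarrow> nat stream \<Rightarrow> nat \<Rightarrow> (nat \<Rightarrow> bool)" where
  "traj n kind b \<omega> 0 = init_op kind b"
| "traj n kind b \<omega> (Suc t) = update n kind (traj n kind b \<omega> t) (\<omega> !! t)"

definition ones :: "nat \<Rightarrow> (nat \<Rightarrow> bool) \<Rightarrow> nat" where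
  "ones n x = card {i. i < n \<and> x i}"

text \<open>Probability space: independent fair bits for initial opinions (Bernoulli(1/2)
  per agent, only used for followers), paired with an i.i.d. sequence of uniformly
  chosen updating agents from {0..<n}.\<close>
definition game_space :: "nat \<Rightarrow> ((nat \<Rightarrow> bool) \<times> nat stream) measure" where
  "game_space n = measure_pmf (Pi_pmf {0..<n} False (\<lambda>_. bernoulli_pmf (1/2)))
                   \<Otimes>\<^sub>M stream_space (measure_pmf (pmf_of_set {0..<n}))"

definition no_decision :: "nat \<Rightarrow> nat \<Rightarrow> (nat \<Rightarrow> agent_kind) \<Rightarrow> ((nat \<Rightarrow> bool) \<times> nat stream) set" where
  "no_decision n k kind = {(b, \<omega>) \<in> space (game_space n).
       \<forall>t. ones n (traj n kind b \<omega> t) < k}"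

end

theory Submission
  imports Defs
begin

lemma card_minus_one:
  assumes "j < (n::nat)"
  shows "card {i. i < n \<and> i \<noteq> j \<and> P i} + (if P j then 1 else 0) = card {i. i < n \<and> P i}"
proof (cases "P j")
  case True
  have "{i. i < n \<and> P i} = insert j {i. i < n \<and> i \<noteq> j \<and> P i}" using True assms by auto
  moreover have "finite {i. i < n \<and> i \<noteq> j \<and> P i}" by (rule finite_subset[of _ "{..<n}"]) auto
  ultimately show ?thesis using True by simp
next
  case False
  have "{i. i < n \<and> P i} = {i. i < n \<and> i \<noteq> j \<and> P i}" using False by auto
  then show ?thesis using False by simp
qed

lemma card_split_bool:
  "card {i. i < (n::nat) \<and> P i} + card {i. i < n \<and> \<not> P i} = n"
proof -
  have "card {i. i < n \<and> P i} + card {i. i < n \<and> \<not> P i} = card ({i. i < n \<and> P i} \<union> {i. i < n \<and> \<not> P i})"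
    by (rule card_Un_disjoint[symmetric]) auto
  also have "{i. i < n \<and> P i} \<union> {i. i < n \<and> \<not> P i} = {..<n}" by auto
  finally show ?thesis by simp
qed

definition Inv :: "nat \<Rightarrow> (nat \<Rightarrow> agent_kind) \<Rightarrow> (nat \<Rightarrow> bool) \<Rightarrow> bool" where
  "Inv n kind x \<longleftrightarrow> (\<forall>i<n. kind i = Rejector \<longrightarrow> \<not> x i) \<and> (\<forall>i<n. kind i = Consentor \<longrightarrow> x i)
     \<and> n < 2 * ones n x"

lemma follower_update_true:
  assumes inv: "n < 2 * ones n x" and j: "j < n" and f: "kind j = Follower"
  shows "update n kind x j j"
proof -
  define c1 where "c1 = card {i. i < n \<and> i \<noteq> j \<and> x i}"
  define c0 where "c0 = card {i. i < n \<and> i \<noteq> j \<and> \<not> x i}"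
  have e1: "c1 + (if x j then 1 else 0) = ones n x"
    unfolding c1_def ones_def by (rule card_minus_one[OF j])
  have e0: "c0 + (if \<not> x j then 1 else 0) = card {i. i < n \<and> \<not> x i}"
    unfolding c0_def by (rule card_minus_one[OF j])
  have s: "ones n x + card {i. i < n \<and> \<not> x i} = n"
    unfolding ones_def by (rule card_split_bool)
  have "(if c1 > c0 then True else if c0 > c1 then False else x j)"
    using e1 e0 s inv by (cases "x j") auto
  then show ?thesis using f unfolding update_def c1_def c0_def Let_def by simp
qed

lemma update_other: "i \<noteq> j \<Longrightarrow> update n kind x j i = x i"
  unfolding update_def by simp

lemma update_step:
  assumes inv: "Inv n kind x"
  shows "Inv n kind (update n kind x j)" and "\<And>i. i < n \<Longrightarrow> x i \<Longrightarrow> update n kind x j i"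
    and "j < n \<Longrightarrow> kind j = Follower \<Longrightarrow> update n kind x j j"
proof -
  have I1: "\<forall>i<n. kind i = Rejector \<longrightarrow> \<not> x i" and I2: "\<forall>i<n. kind i = Consentor \<longrightarrow> x i"
    and I3: "n < 2 * ones n x" using inv unfolding Inv_def by auto
  show fj: "j < n \<Longrightarrow> kind j = Follower \<Longrightarrow> update n kind x j j"
    using follower_update_true[OF I3] by blast
  show mono: "\<And>i. i < n \<Longrightarrow> x i \<Longrightarrow> update n kind x j i"
  proof -
    fix i assume i: "i < n" "x i"
    show "update n kind x j i"
    proof (cases "i = j")
      case True
      then show ?thesis using i I1 I2 fj unfolding update_def
        by (cases "kind j") auto
    next
      case False then show ?thesis using i by (simp add: update_other)
    qed
  qed
  have "ones n x \<le> ones n (update n kind x j)"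
    unfolding ones_def by (rule card_mono) (auto intro: mono)
  moreover have "\<forall>i<n. kind i = Rejector \<longrightarrow> \<not> update n kind x j i"
    using I1 by (auto simp: update_def)
  moreover have "\<forall>i<n. kind i = Consentor \<longrightarrow> update n kind x j i"
    using I2 by (auto simp: update_def)
  ultimately show "Inv n kind (update n kind x j)" using I3 unfolding Inv_def by auto
qed

lemma traj_Inv:
  assumes "Inv n kind (init_op kind b)"
  shows "Inv n kind (traj n kind b \<omega> t)"
  by (induction t) (auto intro: update_step assms)

lemma traj_mono:
  assumes "Inv n kind (init_op kind b)" and "s \<le> t" and "i < n" and "traj n kind b \<omega> s i"
  shows "traj n kind b \<omega> t i"
  using assms(2,4)
proof (induction t)
  case 0 then show ?case by simp
next
  case (Suc t)
  show ?case
  proof (cases "s = Suc t")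
    case True then show ?thesis using Suc by simp
  next
    case False
    then have "traj n kind b \<omega> t i" using Suc by auto
    then show ?thesis using update_step(2)[OF traj_Inv[OF assms(1)]] assms(3) by simp
  qed
qed

lemma init_Inv:
  assumes "n < 2 * ones n (init_op kind b)"
  shows "Inv n kind (init_op kind b)"
  using assms unfolding Inv_def init_op_def by auto

lemma decision_reached:
  assumes big: "n < 2 * ones n (init_op kind b)"
    and hit: "\<forall>i<n. kind i = Follower \<longrightarrow> (\<exists>t. \<omega> !! t = i)"
    and k: "k \<le> card {i. i < n \<and> kind i \<noteq> Rejector}"
  shows "\<exists>t. k \<le> ones n (traj n kind b \<omega> t)"
proof -
  have inv0: "Inv n kind (init_op kind b)" by (rule init_Inv[OF big])
  define F where "F = {i. i < n \<and> kind i = Follower}"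
  define tt where "tt i = (SOME t. \<omega> !! t = i)" for i
  have tt: "\<omega> !! tt i = i" if "i \<in> F" for i
    using hit that unfolding F_def tt_def by (metis (mono_tags, lifting) mem_Collect_eq someI_ex)
  define T where "T = Suc (Max (tt ` F))"
  have finF: "finite F" unfolding F_def by auto
  have allF: "traj n kind b \<omega> T i" if "i \<in> F" for i
  proof -
    have "tt i \<le> Max (tt ` F)" using finF that by auto
    then have le: "Suc (tt i) \<le> T" unfolding T_def by simp
    have "traj n kind b \<omega> (Suc (tt i)) i"
      using update_step(3)[OF traj_Inv[OF inv0], of "\<omega> !! tt i" \<omega> "tt i"] tt[OF that] that
      unfolding F_def by simp
    then show ?thesis using traj_mono[OF inv0 le] that unfolding F_def by simp
  qed
  have invT: "Inv n kind (traj n kind b \<omega> T)" by (rule traj_Inv[OF inv0])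
  have "{i. i < n \<and> kind i \<noteq> Rejector} \<subseteq> {i. i < n \<and> traj n kind b \<omega> T i}"
  proof
    fix i assume "i \<in> {i. i < n \<and> kind i \<noteq> Rejector}"
    then show "i \<in> {i. i < n \<and> traj n kind b \<omega> T i}"
      using allF invT unfolding F_def Inv_def by (cases "kind i") auto
  qed
  then have "card {i. i < n \<and> kind i \<noteq> Rejector} \<le> ones n (traj n kind b \<omega> T)"
    unfolding ones_def by (rule card_mono[rotated]) auto
  then show ?thesis using k by (meson le_trans)
qed

lemma traj_local:
  "(\<forall>i<t. \<omega> !! i = \<omega>' !! i) \<Longrightarrow> traj n kind b \<omega> t = traj n kind b \<omega>' t"
  by (induction t) auto

lemma traj_stake: "traj n kind b \<omega> t = traj n kind b (stake t \<omega> @- sconst 0) t"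
  by (rule traj_local) (simp add: shift_snth_less)

lemma pred_step:
  "Measurable.pred (game_space n) (\<lambda>x. ones n (traj n kind (fst x) (snd x) t) < k)"
proof -
  have g: "(\<lambda>x. stake t (snd x)) \<in> measurable (game_space n) (count_space UNIV)"
    unfolding game_space_def by measurable
  have f: "(\<lambda>x. ones n (traj n kind (fst x) (xs @- sconst 0) t) < k) \<in> measurable (game_space n) (count_space UNIV)"
    for xs :: "nat list"
  proof -
    have "(\<lambda>b. ones n (traj n kind b (xs @- sconst 0) t) < k)
       \<in> measurable (measure_pmf (Pi_pmf {0..<n} False (\<lambda>_. bernoulli_pmf (1/2)))) (count_space UNIV)"
      by simp
    then show ?thesis unfolding game_space_def by measurable
  qed
  have "(\<lambda>x. (\<lambda>xs x. ones n (traj n kind (fst x) (xs @- sconst 0) t) < k) (stake t (snd x)) x)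
     \<in> measurable (game_space n) (count_space UNIV)"
    by (rule measurable_compose_countable[OF f g])
  then show ?thesis by (simp flip: traj_stake)
qed

lemma no_decision_sets: "no_decision n k kind \<in> sets (game_space n)"
proof -
  have "no_decision n k kind = {x \<in> space (game_space n). \<forall>t. ones n (traj n kind (fst x) (snd x) t) < k}"
    unfolding no_decision_def by auto
  also have "\<dots> \<in> sets (game_space n)"
    using pred_step by measurable
  finally show ?thesis .
qed

lemma never_hit:
  fixes A :: "nat set"
  assumes iA: "i \<in> A" and finA: "finite A"
  shows "measure (stream_space (measure_pmf (pmf_of_set A))) {\<omega> \<in> space (stream_space (measure_pmf (pmf_of_set A))). \<forall>t. \<omega> !! t \<noteq> i} = 0"
proof -
  define M where "M = measure_pmf (pmf_of_set A)"
  interpret M: prob_space M unfolding M_def by (rule measure_pmf.prob_space_axioms)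
  interpret S: prob_space "stream_space M" by (rule M.prob_space_stream_space)
  have Ane: "A \<noteq> {}" using iA by auto
  define q where "q = measure M (- {i})"
  have q: "q = (real (card A) - 1) / real (card A)"
  proof -
    have "card (- {i} \<inter> A) = card A - 1"
      using iA finA by (metis Compl_eq_Diff_UNIV Diff_Int_distrib2 Int_UNIV_left card_Diff_singleton inf_commute Int_insert_right_if1 inf_bot_right)
    moreover have "card A \<ge> 1" using iA finA by (metis One_nat_def Suc_leI card_gt_0_iff empty_iff)
    ultimately show ?thesis unfolding q_def M_def using finA Ane by (simp add: measure_pmf_of_set of_nat_diff Int_commute)
  qed
  have qlt: "q < 1" using q Ane finA by (simp add: card_gt_0_iff)
  define p where "p = S.prob {\<omega> \<in> space (stream_space M). \<forall>t. \<omega> !! t \<noteq> i}"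
  have sets: "{\<omega> \<in> space (stream_space M). \<forall>t. \<omega> !! t \<noteq> i} \<in> sets (stream_space M)"
    unfolding M_def by measurable
  have "ennreal p = (\<integral>\<^sup>+t. ennreal (S.prob {x \<in> space (stream_space M). \<forall>s. (t ## x) !! s \<noteq> i}) \<partial>M)"
    unfolding p_def by (rule M.prob_stream_space[OF sets])
  also have "\<dots> = (\<integral>\<^sup>+t. ennreal p * indicator (- {i}) t \<partial>M)"
  proof (rule nn_integral_cong)
    fix t
    show "ennreal (S.prob {x \<in> space (stream_space M). \<forall>s. (t ## x) !! s \<noteq> i}) = ennreal p * indicator (- {i}) t"
    proof (cases "t = i")
      case True
      have e: "{x \<in> space (stream_space M). \<forall>s. (i ## x) !! s \<noteq> i} = {}"
        by (auto intro: exI[of _ 0])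
      show ?thesis unfolding True e by simp
    next
      case False
      have "{x \<in> space (stream_space M). \<forall>s. (t ## x) !! s \<noteq> i} = {\<omega> \<in> space (stream_space M). \<forall>t. \<omega> !! t \<noteq> i}"
        using False by (auto simp: Stream_snth split: nat.splits)
      then show ?thesis using False unfolding p_def by simp
    qed
  qed
  also have "\<dots> = ennreal p * emeasure M (- {i})"
    by (rule nn_integral_cmult_indicator) (simp add: M_def)
  also have "\<dots> = ennreal (p * q)"
    unfolding q_def M.emeasure_eq_measure by (subst ennreal_mult) (auto simp: p_def)
  finally have "p = p * q"
    using qlt by (simp add: p_def q_def)
  then have "p * (1 - q) = 0" by (simp add: algebra_simps)
  then have "p = 0" using qlt by simp
  then show ?thesis unfolding p_def M_def .
qed

definition sg :: "bool \<Rightarrow> real" where "sg v = (if v then -1 else 1)"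

abbreviation P1 :: "nat \<Rightarrow> (nat \<Rightarrow> bool) pmf" where
  "P1 n \<equiv> Pi_pmf {0..<n} False (\<lambda>_. bernoulli_pmf (1/2))"

lemma P1_integrable: "integrable (measure_pmf (P1 n)) (f :: _ \<Rightarrow> real)"
  by (rule integrable_measure_pmf_finite) (simp add: set_Pi_pmf finite_PiE_dflt)

lemma E_comp:
  fixes g :: "bool \<Rightarrow> real"
  assumes "i < n"
  shows "(\<integral>b. g (b i) \<partial>P1 n) = g True / 2 + g False / 2"
proof -
  have "(\<integral>b. g (b i) \<partial>P1 n) = (\<integral>v. g v \<partial>map_pmf (\<lambda>b. b i) (P1 n))" by simp
  also have "map_pmf (\<lambda>b. b i) (P1 n) = bernoulli_pmf (1/2)"
    using assms by (subst Pi_pmf_component) auto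
  finally show ?thesis by simp
qed

lemma E_sg: "i < n \<Longrightarrow> (\<integral>b. sg (b i) \<partial>P1 n) = 0"
  using E_comp[of i n sg] by (simp add: sg_def)

lemma E_sg2:
  assumes i: "i < n" and j: "j < n"
  shows "(\<integral>b. sg (b i) * sg (b j) \<partial>P1 n) = (if i = j then 1 else 0)"
proof (cases "i = j")
  case True
  have "sg v * sg v = 1" for v by (simp add: sg_def)
  then show ?thesis using True by simp
next
  case False
  define f where "f x v = (if x = i \<or> x = j then sg v + 1 else 1)" for x v
  have "measure_pmf.expectation (P1 n) (\<lambda>y. \<Prod>x\<in>{0..<n}. f x (y x)) =
        (\<Prod>x\<in>{0..<n}. measure_pmf.expectation (bernoulli_pmf (1/2)) (\<lambda>v. f x v))"
    by (rule expectation_prod_Pi_pmf) (auto simp: f_def sg_def intro: integrable_measure_pmf_finite)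
  also have "\<dots> = 1"
    by (rule prod.neutral) (auto simp: f_def sg_def)
  also have "(\<lambda>y. \<Prod>x\<in>{0..<n}. f x (y x)) = (\<lambda>y. (sg (y i) + 1) * (sg (y j) + 1))"
  proof
    fix y
    have "(\<Prod>x\<in>{0..<n}. f x (y x)) = (\<Prod>x\<in>{x\<in>{0..<n}. x = i \<or> x = j}. sg (y x) + 1)"
      unfolding f_def by (subst prod.inter_filter) auto
    also have "{x\<in>{0..<n}. x = i \<or> x = j} = {i, j}" using i j by auto
    finally show "(\<Prod>x\<in>{0..<n}. f x (y x)) = (sg (y i) + 1) * (sg (y j) + 1)"
      using False by simp
  qed
  finally have "(\<integral>y. (sg (y i) + 1) * (sg (y j) + 1) \<partial>P1 n) = 1" .
  moreover have "(\<integral>y. (sg (y i) + 1) * (sg (y j) + 1) \<partial>P1 n) =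
      (\<integral>y. sg (y i) * sg (y j) \<partial>P1 n) + (\<integral>y. sg (y i) \<partial>P1 n) + (\<integral>y. sg (y j) \<partial>P1 n) + 1"
    by (simp add: algebra_simps P1_integrable)
  ultimately show ?thesis using E_sg[OF i] E_sg[OF j] False by simp
qed

lemma second_moment:
  assumes F: "F \<subseteq> {0..<n}"
  shows "(\<integral>b. ((\<Sum>i\<in>F. sg (b i)) + c)^2 \<partial>P1 n) = real (card F) + c^2"
proof -
  have finF: "finite F" using F finite_subset by blast
  have eq: "((\<Sum>i\<in>F. sg (b i)) + c)^2 = (\<Sum>i\<in>F. \<Sum>j\<in>F. sg (b i) * sg (b j)) + 2 * c * (\<Sum>i\<in>F. sg (b i)) + c^2" for b
    by (simp add: power2_eq_square sum_product algebra_simps)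
  have "(\<integral>b. ((\<Sum>i\<in>F. sg (b i)) + c)^2 \<partial>P1 n) =
     (\<integral>b. (\<Sum>i\<in>F. \<Sum>j\<in>F. sg (b i) * sg (b j)) \<partial>P1 n) + 2 * c * (\<integral>b. (\<Sum>i\<in>F. sg (b i)) \<partial>P1 n) + c^2"
    unfolding eq by (simp add: P1_integrable)
  also have "(\<integral>b. (\<Sum>i\<in>F. \<Sum>j\<in>F. sg (b i) * sg (b j)) \<partial>P1 n) = (\<Sum>i\<in>F. \<Sum>j\<in>F. (\<integral>b. sg (b i) * sg (b j) \<partial>P1 n))"
    by (simp add: P1_integrable integral_sum)
  also have "\<dots> = (\<Sum>i\<in>F. \<Sum>j\<in>F. (if i = j then 1 else 0))"
  proof (intro sum.cong refl)
    fix i j assume "i \<in> F" "j \<in> F"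
    then have "i < n" "j < n" using F by auto
    then show "(\<integral>b. sg (b i) * sg (b j) \<partial>P1 n) = (if i = j then 1 else 0)" by (rule E_sg2)
  qed
  also have "\<dots> = real (card F)" using finF by simp
  also have "(\<integral>b. (\<Sum>i\<in>F. sg (b i)) \<partial>P1 n) = (\<Sum>i\<in>F. (\<integral>b. sg (b i) \<partial>P1 n))"
    by (simp add: P1_integrable integral_sum)
  also have "\<dots> = 0"
    using F by (intro sum.neutral) (auto simp: E_sg)
  finally show ?thesis by simp
qed

lemma cantelli:
  assumes F: "F \<subseteq> {0..<n}" and a: "0 < a"
  shows "measure_pmf.prob (P1 n) {b. a \<le> (\<Sum>i\<in>F. sg (b i))} \<le> real (card F) / (real (card F) + a^2)"
proof -
  define m where "m = real (card F)"
  define c where "c = m / a"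
  have c0: "0 \<le> c" unfolding c_def m_def using a by simp
  have ac: "0 < a + c" using a c0 by simp
  have "measure_pmf.prob (P1 n) {b. a \<le> (\<Sum>i\<in>F. sg (b i))}
      \<le> measure_pmf.prob (P1 n) {b \<in> space (measure_pmf (P1 n)). (a + c)^2 \<le> ((\<Sum>i\<in>F. sg (b i)) + c)^2}"
  proof (rule measure_pmf.finite_measure_mono)
    show "{b. a \<le> (\<Sum>i\<in>F. sg (b i))} \<subseteq> {b \<in> space (measure_pmf (P1 n)). (a + c)^2 \<le> ((\<Sum>i\<in>F. sg (b i)) + c)^2}"
      using ac by (auto intro!: power_mono)
  qed simp
  also have "\<dots> \<le> (\<integral>b. ((\<Sum>i\<in>F. sg (b i)) + c)^2 \<partial>P1 n) / (a + c)^2"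
    by (rule integral_Markov_inequality_measure) (use ac in \<open>auto simp: P1_integrable\<close>)
  also have "\<dots> = (m + c^2) / (a + c)^2"
    unfolding second_moment[OF F] m_def ..
  also have "\<dots> = m / (m + a^2)"
  proof -
    have m0: "0 \<le> m" unfolding m_def by simp
    have e1: "m + c^2 = m * (m + a^2) / a^2" unfolding c_def using a by (simp add: field_simps power2_eq_square)
    have e2: "(a + c)^2 = (m + a^2)^2 / a^2" unfolding c_def using a by (simp add: field_simps power2_eq_square)
    have pos: "0 < m + a^2" using a m0 by (simp add: add_nonneg_pos)
    have "(m + c^2) / (a + c)^2 = (m * (m + a^2) / a^2) / ((m + a^2)^2 / a^2)" by (simp only: e1 e2)
    also have "\<dots> = (m * (m + a^2)) / ((m + a^2) * (m + a^2))"
      using a by (simp add: power2_eq_square)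
    also have "\<dots> = m / (m + a^2)" using pos by simp
    finally show ?thesis .
  qed
  finally show ?thesis unfolding m_def .
qed

lemma final_ineq:
  fixes m r c :: real
  assumes m: "2 \<le> m" and r: "0 \<le> r" and c: "r + 1 \<le> c"
  shows "m / (m + (c - r)^2) \<le> (m * ((m + c + r) + c + r - 1) + 4 * c * r) / (4 * c * (m + r))"
proof -
  define a where "a = c - r"
  have a: "1 \<le> a" using c unfolding a_def by simp
  have ceq: "c = r + a" unfolding a_def by simp
  define N where "N = m * ((m + c + r) + c + r - 1) + 4 * c * r"
  define D where "D = 4 * c * (m + r)"
  have Dp: "0 < D" unfolding D_def using m r c by simp
  have Ep: "0 < m + a^2" using m by (simp add: add_pos_nonneg)
  have id: "N * (m + a^2) - m * D = m * ((m - 1)^2 + (a - 1)^2 * m + (a - 1) * (2 * a^2 + a + 1))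
      + 4 * a^2 * r * m + 4 * a^2 * r^2 + 4 * a^3 * r"
    unfolding N_def D_def ceq by (simp add: algebra_simps power2_eq_square power3_eq_cube)
  have "0 \<le> m * ((m - 1)^2 + (a - 1)^2 * m + (a - 1) * (2 * a^2 + a + 1))"
    using m a by (intro mult_nonneg_nonneg add_nonneg_nonneg) auto
  moreover have "0 \<le> 4 * a^2 * r * m + 4 * a^2 * r^2 + 4 * a^3 * r"
    using m a r by (intro add_nonneg_nonneg mult_nonneg_nonneg) auto
  ultimately have le: "m * D \<le> N * (m + a^2)" using id by linarith
  have "m / (m + a^2) = (m * D) / ((m + a^2) * D)" using Dp by simp
  also have "\<dots> \<le> (N * (m + a^2)) / ((m + a^2) * D)"
    using le Dp Ep by (intro divide_right_mono) auto
  also have "\<dots> = N / D" using Ep by simp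
  finally show ?thesis unfolding N_def D_def a_def .
qed

lemma triv_ineq:
  fixes m r c :: real
  assumes m: "2 \<le> m" and r: "c \<le> r" and c: "1 \<le> c"
  shows "1 \<le> (m * ((m + c + r) + c + r - 1) + 4 * c * r) / (4 * c * (m + r))"
proof -
  have Dp: "0 < 4 * c * (m + r)" using m r c by simp
  have "4 * c * (m + r) \<le> m * ((m + c + r) + c + r - 1) + 4 * c * r"
  proof -
    have "4 * c * m \<le> m * ((m + c + r) + c + r - 1)"
    proof -
      have "4 * c \<le> (m + c + r) + c + r - 1" using m r c by linarith
      then have "m * (4 * c) \<le> m * ((m + c + r) + c + r - 1)" using m by (intro mult_left_mono) auto
      then show ?thesis by (simp add: mult.commute mult.left_commute)
    qed
    then show ?thesis by (simp add: algebra_simps)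
  qed
  then show ?thesis using Dp by simp
qed
lemma sum_sg:
  assumes "finite F"
  shows "(\<Sum>i\<in>F. sg (b i)) = real (card F) - 2 * real (card {i\<in>F. b i})"
  using assms
proof (induction F rule: finite_induct)
  case empty then show ?case by simp
next
  case (insert x F)
  have fin: "finite {i\<in>F. b i}" using insert by auto
  have "{i\<in>insert x F. b i} = (if b x then insert x {i\<in>F. b i} else {i\<in>F. b i})" by auto
  moreover have "x \<notin> {i\<in>F. b i}" using insert by auto
  ultimately show ?case using insert fin by (auto simp: sg_def)
qed

lemma card_three:
  fixes n :: nat and kind :: "nat \<Rightarrow> agent_kind"
  shows "n = num_kind n kind Rejector + num_kind n kind Consentor + num_kind n kind Follower"
    and "card {i. i < n \<and> kind i \<noteq> Rejector} = num_kind n kind Consentor + num_kind n kind Follower"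
proof -
  have d1: "card ({i. i < n \<and> kind i = Consentor} \<union> {i. i < n \<and> kind i = Follower})
      = num_kind n kind Consentor + num_kind n kind Follower"
    unfolding num_kind_def by (rule card_Un_disjoint) auto
  have e1: "{i. i < n \<and> kind i \<noteq> Rejector} = {i. i < n \<and> kind i = Consentor} \<union> {i. i < n \<and> kind i = Follower}"
    by (auto, case_tac "kind x", auto)
  show "card {i. i < n \<and> kind i \<noteq> Rejector} = num_kind n kind Consentor + num_kind n kind Follower"
    using d1 e1 by simp
  have "n = card ({i. i < n \<and> kind i = Rejector} \<union> {i. i < n \<and> kind i \<noteq> Rejector})"
  proof -
    have "{i. i < n \<and> kind i = Rejector} \<union> {i. i < n \<and> kind i \<noteq> Rejector} = {..<n}" by auto
    then show ?thesis by simp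
  qed
  also have "\<dots> = num_kind n kind Rejector + card {i. i < n \<and> kind i \<noteq> Rejector}"
    unfolding num_kind_def by (rule card_Un_disjoint) auto
  finally show "n = num_kind n kind Rejector + num_kind n kind Consentor + num_kind n kind Follower"
    using d1 e1 by simp
qed

lemma ones_init:
  "ones n (init_op kind b) = num_kind n kind Consentor + card {i\<in>{i. i < n \<and> kind i = Follower}. b i}"
proof -
  have "{i. i < n \<and> init_op kind b i} = {i. i < n \<and> kind i = Consentor} \<union> {i\<in>{i. i < n \<and> kind i = Follower}. b i}"
  proof (rule set_eqI)
    fix i show "i \<in> {i. i < n \<and> init_op kind b i} \<longleftrightarrow> i \<in> {i. i < n \<and> kind i = Consentor} \<union> {i\<in>{i. i < n \<and> kind i = Follower}. b i}"
      by (cases "kind i") (auto simp: init_op_def)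
  qed
  moreover have "card ({i. i < n \<and> kind i = Consentor} \<union> {i\<in>{i. i < n \<and> kind i = Follower}. b i}) =
     card {i. i < n \<and> kind i = Consentor} + card {i\<in>{i. i < n \<and> kind i = Follower}. b i}"
    by (rule card_Un_disjoint) auto
  ultimately show ?thesis unfolding ones_def num_kind_def by simp
qed

theorem theorem2:
  fixes n k :: nat and kind :: "nat \<Rightarrow> agent_kind"
  defines "nr \<equiv> num_kind n kind Rejector"
      and "nc \<equiv> num_kind n kind Consentor"
  assumes followers: "n - nr - nc \<ge> 2"
      and nc_pos: "0 < nc"
      and k_lo: "nc < k" and k_hi: "k \<le> n - nr"
  shows "no_decision n k kind \<in> sets (game_space n)
         \<and> measure (game_space n) (no_decision n k kind)
             \<le> (real (n - nc - nr) * (real n + real nc + real nr - 1) + 4 * real nc * real nr)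
                / (4 * real nc * real (n - nc))"
proof -
  define F where "F = {i. i < n \<and> kind i = Follower}"
  define m where "m = card F"
  have part: "n = nr + nc + m" unfolding nr_def nc_def m_def F_def num_kind_def[symmetric]
    by (rule card_three(1))
  have nonR: "card {i. i < n \<and> kind i \<noteq> Rejector} = nc + m"
    unfolding nc_def m_def F_def num_kind_def[symmetric] by (rule card_three(2))
  have m2: "2 \<le> m" using followers part by simp
  have FS: "F \<subseteq> {0..<n}" unfolding F_def by auto
  define M1 where "M1 = measure_pmf (P1 n)"
  define M2 where "M2 = stream_space (measure_pmf (pmf_of_set {0..<n}))"
  have G: "game_space n = M1 \<Otimes>\<^sub>M M2" unfolding game_space_def M1_def M2_def ..
  interpret M1: prob_space M1 unfolding M1_def by (rule measure_pmf.prob_space_axioms)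
  interpret M2: prob_space M2 unfolding M2_def
    by (rule prob_space.prob_space_stream_space[OF measure_pmf.prob_space_axioms])
  interpret PP: pair_prob_space M1 M2 by unfold_locales
  define A' where "A' = {b. 2 * ones n (init_op kind b) \<le> n}"
  define SN where "SN = {\<omega> \<in> space M2. \<exists>i<n. \<forall>t. \<omega> !! t \<noteq> i}"
  have sp2: "space M2 = UNIV" unfolding M2_def by (simp add: space_stream_space)
  have sp1: "space M1 = UNIV" unfolding M1_def by simp
  have SN_sets: "SN \<in> sets M2" unfolding SN_def M2_def by measurable
  have A'_sets: "A' \<in> sets M1" unfolding M1_def by simp
  have nd_sets: "no_decision n k kind \<in> sets (game_space n)" by (rule no_decision_sets)
  have sub: "no_decision n k kind \<subseteq> A' \<times> UNIV \<union> UNIV \<times> SN"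
  proof
    fix x assume x: "x \<in> no_decision n k kind"
    obtain b \<omega> where bw: "x = (b, \<omega>)" by (cases x)
    have nd: "\<forall>t. ones n (traj n kind b \<omega> t) < k" using x bw unfolding no_decision_def by auto
    show "x \<in> A' \<times> UNIV \<union> UNIV \<times> SN"
    proof (rule ccontr)
      assume "x \<notin> A' \<times> UNIV \<union> UNIV \<times> SN"
      then have big: "n < 2 * ones n (init_op kind b)" and hit: "\<forall>i<n. \<exists>t. \<omega> !! t = i"
        using bw sp2 unfolding A'_def SN_def by auto
      have "\<exists>t. k \<le> ones n (traj n kind b \<omega> t)"
        by (rule decision_reached[OF big]) (use hit nonR k_hi part in auto)
      then show False using nd by (meson not_le)
    qed
  qed
  have SN0: "measure M2 SN = 0"
  proof -
    have "SN = (\<Union>i\<in>{..<n}. {\<omega> \<in> space M2. \<forall>t. \<omega> !! t \<noteq> i})" unfolding SN_def by auto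
    then have "measure M2 SN \<le> (\<Sum>i\<in>{..<n}. measure M2 {\<omega> \<in> space M2. \<forall>t. \<omega> !! t \<noteq> i})"
      by (simp only:) (rule M2.finite_measure_subadditive_finite, auto simp: M2_def)
    also have "\<dots> = 0"
      by (rule sum.neutral) (auto simp: M2_def intro!: never_hit)
    finally show ?thesis by (simp add: measure_nonneg antisym)
  qed
  have mA: "measure (game_space n) (A' \<times> UNIV) = measure M1 A'"
  proof -
    have "emeasure (M1 \<Otimes>\<^sub>M M2) (A' \<times> space M2) = emeasure M1 A' * emeasure M2 (space M2)"
      by (rule M2.emeasure_pair_measure_Times[OF A'_sets]) simp
    then show ?thesis unfolding G sp2 using M2.emeasure_space_1 sp2
      by (simp add: PP.emeasure_eq_measure M1.emeasure_eq_measure)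
  qed
  have mN: "measure (game_space n) (UNIV \<times> SN) = 0"
  proof -
    have "emeasure (M1 \<Otimes>\<^sub>M M2) (space M1 \<times> SN) = emeasure M1 (space M1) * emeasure M2 SN"
      by (rule M2.emeasure_pair_measure_Times[OF _ SN_sets]) simp
    then show ?thesis unfolding G sp1[symmetric] using SN0
      by (simp add: PP.emeasure_eq_measure M2.emeasure_eq_measure)
  qed
  have bound: "measure (game_space n) (no_decision n k kind) \<le> measure M1 A'"
  proof -
    have U1: "A' \<times> UNIV \<in> sets (M1 \<Otimes>\<^sub>M M2)"
      using pair_measureI[OF A'_sets sets.top[of M2]] sp2 by simp
    have U2: "UNIV \<times> SN \<in> sets (M1 \<Otimes>\<^sub>M M2)"
      using pair_measureI[OF sets.top[of M1] SN_sets] sp1 by simp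
    have "measure (game_space n) (no_decision n k kind) \<le> measure (game_space n) (A' \<times> UNIV \<union> UNIV \<times> SN)"
      unfolding G by (rule PP.finite_measure_mono[OF sub[unfolded G]]) (use U1 U2 in auto)
    also have "\<dots> \<le> measure (game_space n) (A' \<times> UNIV) + measure (game_space n) (UNIV \<times> SN)"
      unfolding G by (rule measure_Un_le) (use U1 U2 in auto)
    finally show ?thesis using mA mN by simp
  qed
  define B where "B = (real (n - nc - nr) * (real n + real nc + real nr - 1) + 4 * real nc * real nr)
                / (4 * real nc * real (n - nc))"
  have Beq: "B = (real m * ((real m + real nc + real nr) + real nc + real nr - 1) + 4 * real nc * real nr)
      / (4 * real nc * (real m + real nr))"
    unfolding B_def using part by simp
  have "measure M1 A' \<le> B"
  proof (cases "nc \<le> nr")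
    case True
    have "1 \<le> B" unfolding Beq
      by (rule triv_ineq) (use m2 True nc_pos in auto)
    then show ?thesis using M1.prob_le_1 by (meson order.trans)
  next
    case False
    define a where "a = real nc - real nr"
    have a: "0 < a" using False unfolding a_def by simp
    have "A' \<subseteq> {b. a \<le> (\<Sum>i\<in>F. sg (b i))}"
    proof
      fix b assume "b \<in> A'"
      then have "2 * (nc + card {i\<in>F. b i}) \<le> n" unfolding A'_def ones_init nc_def F_def by simp
      then have "2 * (real nc + real (card {i\<in>F. b i})) \<le> real nr + real nc + real m"
        using part by (metis of_nat_add of_nat_le_iff of_nat_mult of_nat_numeral)
      then show "b \<in> {b. a \<le> (\<Sum>i\<in>F. sg (b i))}"
        using sum_sg[of F b] FS finite_subset unfolding a_def m_def by fastforce
    qed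
    then have "measure M1 A' \<le> measure_pmf.prob (P1 n) {b. a \<le> (\<Sum>i\<in>F. sg (b i))}"
      unfolding M1_def by (rule measure_pmf.finite_measure_mono) simp
    also have "\<dots> \<le> real m / (real m + a^2)"
      unfolding m_def by (rule cantelli[OF FS a])
    also have "\<dots> \<le> B" unfolding Beq a_def
      by (rule final_ineq) (use m2 False in auto)
    finally show ?thesis .
  qed
  then show ?thesis using nd_sets bound unfolding B_def by simp
qed

end
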